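(* Let $V$ be a simple unitary vertex operator algebra and let $a \in V_d$. Then for all $b \in V$ and all integers $m \geq 0$, $$\|a_m b\|^2 \leq \big(b \,\big|\, (a_{-d}a^* )_0\, b\big).$$ Consequently $\|a_m\|_n^2 \leq \|(a_{-d}a^* )_0\|_n$ for all $m \in \mathbb{Z}_{\geq 0}$ and all $n \in \mathbb{Z}$; in particular $\|a_0\|_n^2 \leq \|(a_{-d}a^* )_0\|_n$ for all $n\in\mathbb{Z}$.
   Context: A simple unitary vertex operator algebra is a vertex operator algebra $V$ (over $\mathbb{C}$) of CFT type, i.e. $V=\bigoplus_{n\geq 0}V_n$ with $V_n=\ker(L_0-n1_V)$ and $V_0=\mathbb{C}\Omega$, with vacuum $\Omega$ and conformal vector $\nu$, $Y(\nu,z)=\sum_{n}L_nz^{-n-2}$, equipped with a scalar product $(\cdot|\cdot)$ with $(\Omega|\Omega)=1$ and an antilinear involution $a\mapsto a^*$ with $\nu^*=\nu$ such that $(b|a_nc)=(a^*_{-n}b|c)$ for all $a,b,c\in V$, $n\in\mathbb{Z}$. For $a\in V$ the modes $a_n\in\mathrm{End}(V)$ are defined by $Y(z^{L_0}a,z)=\sum_{n\in\mathbb{Z}}a_nz^{-n}$; for $a\in V_d$ this means $a_n=a_{(n+d-1)}$ where $Y(a,z)=\sum_n a_{(n)}z^{-n-1}$, and $a_{-d}b=a_{(-1)}b$. Write $\|a\|=\sqrt{(a|a)}$, $V_{\leq n}=\bigoplus_{k\leq n}V_k$, and for $R\in\mathrm{End}(V)$, $\|R\|_n:=\sup\{\|Rb\|: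 b\in V_{\leq n},\ \|b\|\leq 1\}\in[0,+\infty]$. *)

theory Defs
  imports "HOL-Analysis.Analysis"
begin

text \<open>Data of a (unitary) vertex operator algebra on a carrier type 'v.
  nprod V a n b is the n-th product a_(n) b, i.e. Y(a,z) b = sum_n a_(n) b z^(-n-1).
  ip V x y is the scalar product, antilinear in x and linear in y.\<close>

record 'v voa_data =
  smul  :: "complex \<Rightarrow> 'v \<Rightarrow> 'v"
  nprod :: "'v \<Rightarrow> int \<Rightarrow> 'v \<Rightarrow> 'v"
  vac   :: 'v
  conf  :: 'v
  ip    :: "'v \<Rightarrow> 'v \<Rightarrow> complex"
  star  :: "'v \<Rightarrow> 'v"

definition Lmode :: "('v::ab_group_add) voa_data \<Rightarrow> int \<Rightarrow> 'v \<Rightarrow> 'v" where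
  "Lmode V n x = nprod V (conf V) (n + 1) x"

definition Vdeg :: "('v::ab_group_add) voa_data \<Rightarrow> nat \<Rightarrow> 'v set" where
  "Vdeg V k = {x. Lmode V 0 x = smul V (of_nat k) x}"

definition hcomp :: "('v::ab_group_add) voa_data \<Rightarrow> nat \<Rightarrow> 'v \<Rightarrow> 'v" where
  "hcomp V k v = (SOME w. \<exists>f N. (\<forall>j. f j \<in> Vdeg V j) \<and> (\<forall>j>N. f j = 0)
                       \<and> v = sum f {..N} \<and> w = f k)"

definition degbound :: "('v::ab_group_add) voa_data \<Rightarrow> 'v \<Rightarrow> nat" where
  "degbound V v = (LEAST N. \<forall>k>N. hcomp V k v = 0)"

text \<open>Modes a_n defined by Y(z^(L_0) a, z) = sum_n a_n z^(-n), extended linearly: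
  for a in V_d, a_n = a_(n+d-1).\<close>
definition mode :: "('v::ab_group_add) voa_data \<Rightarrow> 'v \<Rightarrow> int \<Rightarrow> 'v \<Rightarrow> 'v" where
  "mode V a n c = (\<Sum>k\<le>degbound V a. nprod V (hcomp V k a) (n + int k - 1) c)"

definition sgn_pow :: "int \<Rightarrow> complex" where
  "sgn_pow r = (if even r then 1 else -1)"

text \<open>Borcherds (Jacobi) identity, with all sums truncated at any M beyond which
  the summands vanish.\<close>
definition borcherds :: "('v::ab_group_add) voa_data \<Rightarrow> bool" where
  "borcherds V \<longleftrightarrow> (\<forall>a b c p q r M.
     (\<forall>i>M. nprod V a (r + int i) b = 0 \<and> nprod V b (q + int i) c = 0
             \<and> nprod V a (p + int i) c = 0) \<longrightarrow>
     (\<Sum>i\<le>M. smul V ((of_int p :: complex) gchoose i)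
                 (nprod V (nprod V a (r + int i) b) (p + q - int i) c))
     = (\<Sum>i\<le>M. smul V ((-1) ^ i * ((of_int r :: complex) gchoose i))
                 (nprod V a (p + r - int i) (nprod V b (q + int i) c)
                  - smul V (sgn_pow r) (nprod V b (q + r - int i) (nprod V a (p + int i) c)))))"

definition vertex_algebra :: "('v::ab_group_add) voa_data \<Rightarrow> bool" where
  "vertex_algebra V \<longleftrightarrow>
     vector_space (smul V) \<and>
     (\<forall>n b. Vector_Spaces.linear (smul V) (smul V) (\<lambda>a. nprod V a n b)) \<and>
     (\<forall>n a. Vector_Spaces.linear (smul V) (smul V) (\<lambda>b. nprod V a n b)) \<and>
     (\<forall>a b. \<exists>N. \<forall>n\<ge>N. nprod V a n b = 0) \<and>
     (\<forall>n b. nprod V (vac V) n b = (if n = -1 then b else 0)) \<and>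
     (\<forall>a. nprod V a (-1) (vac V) = a) \<and>
     (\<forall>a n. n \<ge> 0 \<longrightarrow> nprod V a n (vac V) = 0) \<and>
     borcherds V"

definition voa_cft_type :: "('v::ab_group_add) voa_data \<Rightarrow> bool" where
  "voa_cft_type V \<longleftrightarrow>
     vertex_algebra V \<and>
     (\<exists>c::complex. \<forall>m n x.
        Lmode V m (Lmode V n x) - Lmode V n (Lmode V m x)
        = smul V (of_int (m - n)) (Lmode V (m + n) x)
          + (if m + n = 0 then smul V ((of_int (m^3 - m) / 12) * c) x else 0)) \<and>
     (\<forall>a n b. nprod V (Lmode V (-1) a) n b = smul V (- of_int n) (nprod V a (n - 1) b)) \<and>
     (\<forall>v. \<exists>f N. (\<forall>j. f j \<in> Vdeg V j) \<and> (\<forall>j>N. f j = 0) \<and> v = sum f {..N}) \<and>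
     (\<forall>k. \<exists>B. finite B \<and> Vdeg V k \<subseteq> module.span (smul V) B) \<and>
     conf V \<in> Vdeg V 2 \<and>
     Vdeg V 0 = {smul V c (vac V) | c. True}"

definition voa_ideal :: "('v::ab_group_add) voa_data \<Rightarrow> 'v set \<Rightarrow> bool" where
  "voa_ideal V I \<longleftrightarrow> module.subspace (smul V) I \<and>
     (\<forall>a b n. b \<in> I \<longrightarrow> nprod V a n b \<in> I \<and> nprod V b n a \<in> I)"

definition simple_voa :: "('v::ab_group_add) voa_data \<Rightarrow> bool" where
  "simple_voa V \<longleftrightarrow> (\<forall>I. voa_ideal V I \<longrightarrow> I = {0} \<or> I = UNIV)"

definition unitary_voa :: "('v::ab_group_add) voa_data \<Rightarrow> bool" where
  "unitary_voa V \<longleftrightarrow>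
     voa_cft_type V \<and>
     (\<forall>x y z. ip V x (y + z) = ip V x y + ip V x z) \<and>
     (\<forall>x y c. ip V x (smul V c y) = c * ip V x y) \<and>
     (\<forall>x y. ip V y x = cnj (ip V x y)) \<and>
     (\<forall>x. Im (ip V x x) = 0 \<and> Re (ip V x x) \<ge> 0) \<and>
     (\<forall>x. ip V x x = 0 \<longrightarrow> x = 0) \<and>
     ip V (vac V) (vac V) = 1 \<and>
     (\<forall>x y. star V (x + y) = star V x + star V y) \<and>
     (\<forall>c x. star V (smul V c x) = smul V (cnj c) (star V x)) \<and>
     (\<forall>x. star V (star V x) = x) \<and>
     star V (conf V) = conf V \<and>
     (\<forall>a b c n. ip V b (mode V a n c) = ip V (mode V (star V a) (- n) b) c)"

definition vnorm :: "('v::ab_group_add) voa_data \<Rightarrow> 'v \<Rightarrow> real" where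
  "vnorm V x = sqrt (Re (ip V x x))"

definition Vle :: "('v::ab_group_add) voa_data \<Rightarrow> int \<Rightarrow> 'v set" where
  "Vle V n = {b. \<forall>k. int k > n \<longrightarrow> hcomp V k b = 0}"

definition opnorm :: "('v::ab_group_add) voa_data \<Rightarrow> int \<Rightarrow> ('v \<Rightarrow> 'v) \<Rightarrow> ereal" where
  "opnorm V n R = Sup {ereal (vnorm V (R b)) | b. b \<in> Vle V n \<and> vnorm V b \<le> 1}"

end

theory Submission
  imports Defs
begin
lemma sup_sq:
  fixes F G :: "'b \<Rightarrow> real"
  assumes ex: "\<exists>b. P b" and h: "\<And>b. P b \<Longrightarrow> 0 \<le> F b \<and> (F b)^2 \<le> G b"
  shows "(Sup {ereal (F b) | b. P b})^2 \<le> Sup {ereal (G b) | b. P b}"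
proof -
  obtain b0 where b0: "P b0" using ex by blast
  show ?thesis
  proof (cases "Sup {ereal (G b) | b. P b} = \<infinity>")
    case True then show ?thesis by simp
  next
    case False
    have G0: "ereal (G b0) \<le> Sup {ereal (G b) | b. P b}" by (rule Sup_upper) (use b0 in blast)
    have "0 \<le> G b0" using h[OF b0] by (meson order.trans zero_le_power2)
    then have ninf: "Sup {ereal (G b) | b. P b} \<noteq> -\<infinity>" using G0 by auto
    define K where "K = real_of_ereal (Sup {ereal (G b) | b. P b})"
    have SK: "Sup {ereal (G b) | b. P b} = ereal K" using False ninf unfolding K_def by (cases "Sup {ereal (G b) | b. P b}") auto
    have GK: "\<And>b. P b \<Longrightarrow> G b \<le> K"
    proof -
      fix b assume "P b"
      then have "ereal (G b) \<le> Sup {ereal (G b) | b. P b}" by (intro Sup_upper) blast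
      then show "G b \<le> K" using SK by simp
    qed
    have FK: "\<And>b. P b \<Longrightarrow> F b \<le> sqrt K"
      using h GK by (meson order.trans real_le_rsqrt)
    have up: "Sup {ereal (F b) | b. P b} \<le> ereal (sqrt K)"
      by (rule Sup_least) (use FK in auto)
    have lo: "ereal (F b0) \<le> Sup {ereal (F b) | b. P b}" by (rule Sup_upper) (use b0 in blast)
    have F0: "0 \<le> F b0" using h[OF b0] by simp
    obtain r where r: "Sup {ereal (F b) | b. P b} = ereal r"
      using up lo F0 by (cases "Sup {ereal (F b) | b. P b}") auto
    have r0: "0 \<le> r" using lo F0 r by simp
    have rK: "r \<le> sqrt K" using up r by simp
    have K0: "0 \<le> K" using GK[OF b0] \<open>0 \<le> G b0\<close> by simp
    have "r^2 \<le> (sqrt K)^2" using rK r0 by (rule power_mono)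
    then have "r^2 \<le> K" using K0 by simp
    then show ?thesis unfolding r SK by (simp add: power2_eq_square)
  qed
qed

locale uv = fixes V :: "('v::ab_group_add) voa_data" assumes U: "unitary_voa V"
begin
lemma CFT: "voa_cft_type V" using U unfolding unitary_voa_def by blast
lemma VA: "vertex_algebra V" using CFT unfolding voa_cft_type_def by blast
sublocale vs: vector_space "smul V" using VA unfolding vertex_algebra_def by blast
lemma linL: "module_hom (smul V) (smul V) (\<lambda>a. nprod V a n b)"
  using VA unfolding vertex_algebra_def module_hom_iff_linear by blast
lemma linR: "module_hom (smul V) (smul V) (\<lambda>b. nprod V a n b)"
  using VA unfolding vertex_algebra_def module_hom_iff_linear by blast

lemma nprod_addL: "nprod V (x+y) n b = nprod V x n b + nprod V y n b"
  using module_hom.add[OF linL] by simp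
lemma nprod_smulL: "nprod V (smul V c x) n b = smul V c (nprod V x n b)"
  using module_hom.scale[OF linL] by simp
lemma nprod_zeroL[simp]: "nprod V 0 n b = 0"
  using module_hom.zero[OF linL] by simp
lemma nprod_sumL: "nprod V (sum f A) n b = (\<Sum>x\<in>A. nprod V (f x) n b)"
  using module_hom.sum[OF linL] by simp
lemma nprod_addR: "nprod V a n (x+y) = nprod V a n x + nprod V a n y"
  using module_hom.add[OF linR] by simp
lemma nprod_diffR: "nprod V a n (x-y) = nprod V a n x - nprod V a n y"
  using module_hom.diff[OF linR] by simp
lemma nprod_smulR: "nprod V a n (smul V c x) = smul V c (nprod V a n x)"
  using module_hom.scale[OF linR] by simp
lemma nprod_zeroR[simp]: "nprod V a n 0 = 0"
  using module_hom.zero[OF linR] by simp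
lemma nprod_sumR: "nprod V a n (sum f A) = (\<Sum>x\<in>A. nprod V a n (f x))"
  using module_hom.sum[OF linR] by simp

lemma trunc: "\<exists>K::nat. \<forall>n. n \<ge> int K \<longrightarrow> nprod V a n b = 0"
proof -
  obtain N where "\<forall>n\<ge>N. nprod V a n b = 0" using VA unfolding vertex_algebra_def by blast
  then show ?thesis by (intro exI[of _ "nat N"]) auto
qed

lemma vac_left: "nprod V (vac V) n b = (if n = -1 then b else 0)"
  using VA unfolding vertex_algebra_def by blast

lemma borch: "(\<forall>i>M. nprod V a (r + int i) b = 0 \<and> nprod V b (q + int i) c = 0
             \<and> nprod V a (p + int i) c = 0) \<Longrightarrow>
     (\<Sum>i\<le>M. smul V ((of_int p :: complex) gchoose i)
                 (nprod V (nprod V a (r + int i) b) (p + q - int i) c))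
     = (\<Sum>i\<le>M. smul V ((-1) ^ i * ((of_int r :: complex) gchoose i))
                 (nprod V a (p + r - int i) (nprod V b (q + int i) c)
                  - smul V (sgn_pow r) (nprod V b (q + r - int i) (nprod V a (p + int i) c))))"
  using VA unfolding vertex_algebra_def borcherds_def by blast

lemma transl: "nprod V (Lmode V (-1) a) n b = smul V (- of_int n) (nprod V a (n - 1) b)"
  using CFT unfolding voa_cft_type_def by blast

lemma decomp_ex: "\<exists>f N. (\<forall>j. f j \<in> Vdeg V j) \<and> (\<forall>j>N. f j = 0) \<and> v = sum f {..N}"
  using CFT unfolding voa_cft_type_def by blast

lemma V0: "Vdeg V 0 = {smul V c (vac V) | c. True}"
  using CFT unfolding voa_cft_type_def by blast

lemma L0_zero[simp]: "Lmode V 0 0 = 0" unfolding Lmode_def by simp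
lemma L0_add: "Lmode V 0 (x+y) = Lmode V 0 x + Lmode V 0 y"
  unfolding Lmode_def by (simp add: nprod_addR)
lemma L0_smul: "Lmode V 0 (smul V c x) = smul V c (Lmode V 0 x)"
  unfolding Lmode_def by (simp add: nprod_smulR)
lemma L0_sum: "Lmode V 0 (sum f A) = (\<Sum>x\<in>A. Lmode V 0 (f x))"
  unfolding Lmode_def by (simp add: nprod_sumR)
lemma L0_diff: "Lmode V 0 (x-y) = Lmode V 0 x - Lmode V 0 y"
  unfolding Lmode_def by (simp add: nprod_diffR)

lemma Vdeg_zero[simp]: "0 \<in> Vdeg V k"
  unfolding Vdeg_def Lmode_def by simp
lemma Vdeg_add: "x \<in> Vdeg V k \<Longrightarrow> y \<in> Vdeg V k \<Longrightarrow> x + y \<in> Vdeg V k"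
  unfolding Vdeg_def by (simp add: L0_add vs.scale_right_distrib)
lemma Vdeg_diff: "x \<in> Vdeg V k \<Longrightarrow> y \<in> Vdeg V k \<Longrightarrow> x - y \<in> Vdeg V k"
  unfolding Vdeg_def by (simp add: L0_diff vs.scale_right_diff_distrib)
lemma Vdeg_smul: "x \<in> Vdeg V k \<Longrightarrow> smul V c x \<in> Vdeg V k"
  unfolding Vdeg_def by (simp add: L0_smul mult.commute)

lemma indep: "(\<forall>j. f j \<in> Vdeg V j) \<Longrightarrow> (\<Sum>j\<le>N. f j) = 0 \<Longrightarrow> j \<le> N \<Longrightarrow> f j = 0"
proof (induction N arbitrary: f j)
  case 0 then show ?case by simp
next
  case (Suc N)
  define g where "g j = smul V (of_nat j - of_nat (Suc N)) (f j)" for j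
  have gV: "\<forall>j. g j \<in> Vdeg V j" using Suc.prems(1) by (simp add: g_def Vdeg_smul)
  have L: "Lmode V 0 (\<Sum>j\<le>Suc N. f j) = (\<Sum>j\<le>Suc N. smul V (of_nat j) (f j))"
    unfolding L0_sum using Suc.prems(1) by (intro sum.cong) (auto simp: Vdeg_def)
  have "(\<Sum>j\<le>N. g j) = (\<Sum>j\<le>Suc N. g j)" by (simp add: g_def)
  also have "\<dots> = (\<Sum>j\<le>Suc N. smul V (of_nat j) (f j)) - (\<Sum>j\<le>Suc N. smul V (of_nat (Suc N)) (f j))"
    by (simp add: g_def vs.scale_left_diff_distrib sum_subtractf)
  also have "\<dots> = 0"
  proof -
    have "(\<Sum>j\<le>Suc N. smul V (of_nat (Suc N)) (f j)) = smul V (of_nat (Suc N)) (\<Sum>j\<le>Suc N. f j)"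
      by (simp only: vs.scale_sum_right)
    moreover have "(\<Sum>j\<le>Suc N. smul V (of_nat j) (f j)) = 0" using L Suc.prems(2) by (simp only: L0_zero)
    ultimately show ?thesis using Suc.prems(2) by simp
  qed
  finally have g0: "\<And>j. j \<le> N \<Longrightarrow> g j = 0" using Suc.IH[OF gV] by blast
  have f0: "\<And>j. j \<le> N \<Longrightarrow> f j = 0"
  proof -
    fix j assume jN: "j \<le> N"
    have "(of_nat j::complex) \<noteq> of_nat (Suc N)" unfolding of_nat_eq_iff using jN by simp
    then have "g j = 0" "of_nat j - of_nat (Suc N) \<noteq> (0::complex)" using g0 jN by auto
    then show "f j = 0" by (simp add: g_def)
  qed
  have "f (Suc N) = 0" using Suc.prems(2) f0 by simp
  then show ?case using f0 Suc.prems(3) le_Suc_eq by blast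
qed

lemma decomp_unique:
  assumes "\<forall>j. f j \<in> Vdeg V j" "\<forall>j>N. f j = 0" "\<forall>j. g j \<in> Vdeg V j" "\<forall>j>M. g j = 0"
    "sum f {..N} = sum g {..M}"
  shows "f = g"
proof
  fix j
  define K where "K = max N M"
  have "sum f {..K} = sum f {..N}"
    by (rule sum.mono_neutral_right) (use assms(2) in \<open>auto simp: K_def\<close>)
  moreover have "sum g {..K} = sum g {..M}"
    by (rule sum.mono_neutral_right) (use assms(4) in \<open>auto simp: K_def\<close>)
  ultimately have "(\<Sum>j\<le>K. f j - g j) = 0" using assms(5) by (simp add: sum_subtractf)
  moreover have "\<forall>j. f j - g j \<in> Vdeg V j" using assms(1,3) Vdeg_diff by blast
  ultimately have "\<And>j. j \<le> K \<Longrightarrow> f j - g j = 0" using indep[of "\<lambda>j. f j - g j"] by blast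
  then show "f j = g j" using assms(2,4) by (cases "j \<le> K") (auto simp: K_def)
qed

lemma hcomp_eq:
  assumes "\<forall>j. f j \<in> Vdeg V j" "\<forall>j>N. f j = 0" "x = sum f {..N}"
  shows "hcomp V k x = f k"
proof -
  have ex: "\<exists>w. \<exists>f' N'. (\<forall>j. f' j \<in> Vdeg V j) \<and> (\<forall>j>N'. f' j = 0) \<and> x = sum f' {..N'} \<and> w = f' k"
    using assms by blast
  obtain f' N' where f': "\<forall>j. f' j \<in> Vdeg V j" "\<forall>j>N'. f' j = 0" "x = sum f' {..N'}" "hcomp V k x = f' k"
    using someI_ex[OF ex] unfolding hcomp_def by blast
  have "f' = f" using decomp_unique[OF f'(1,2) assms(1,2)] f'(3) assms(3) by simp
  then show ?thesis using f'(4) by simp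
qed

lemma mode_decomp:
  assumes "\<forall>j. f j \<in> Vdeg V j" "\<forall>j>N. f j = 0" "x = sum f {..N}"
  shows "mode V x n c = (\<Sum>j\<le>N. nprod V (f j) (n + int j - 1) c)"
proof -
  have h: "\<And>k. hcomp V k x = f k" using hcomp_eq[OF assms] .
  have P: "\<forall>k>N. hcomp V k x = 0" using h assms(2) by simp
  define D where "D = degbound V x"
  have D: "\<forall>k>D. hcomp V k x = 0" unfolding D_def degbound_def by (rule LeastI[of _ N]) (rule P)
  have DN: "D \<le> N" unfolding D_def degbound_def by (rule Least_le) (rule P)
  have "mode V x n c = (\<Sum>k\<le>D. nprod V (f k) (n + int k - 1) c)"
    unfolding mode_def D_def[symmetric] h ..
  also have "\<dots> = (\<Sum>j\<le>N. nprod V (f j) (n + int j - 1) c)"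
    by (rule sum.mono_neutral_left) (use D h DN in auto)
  finally show ?thesis .
qed

lemma mode_hom: "x \<in> Vdeg V d \<Longrightarrow> mode V x n c = nprod V x (n + int d - 1) c"
proof -
  assume x: "x \<in> Vdeg V d"
  have "mode V x n c = (\<Sum>j\<le>d. nprod V (if j = d then x else 0) (n + int j - 1) c)"
    by (rule mode_decomp) (use x in auto)
  also have "\<dots> = (\<Sum>j\<le>d. if j = d then nprod V x (n + int j - 1) c else 0)"
    by (intro sum.cong) auto
  finally show ?thesis by simp
qed

lemma mode_smulR: "mode V x n (smul V c y) = smul V c (mode V x n y)"
  unfolding mode_def by (simp add: nprod_smulR vs.scale_sum_right)

lemma g1: "((1::complex) gchoose i) = (if i \<le> 1 then 1 else 0)"
proof -
  have "((1::complex) gchoose i) = of_nat (1 choose i)"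
    using binomial_gbinomial[of 1 i, where 'a=complex] by simp
  then show ?thesis by (cases i) (auto simp: binomial_eq_0)
qed

lemma sgn_pow0[simp]: "sgn_pow 0 = 1" unfolding sgn_pow_def by simp
lemma sgn_powm1[simp]: "sgn_pow (-1) = -1" unfolding sgn_pow_def by simp

lemma deg_prod:
  assumes a: "a \<in> Vdeg V d" and e: "e \<in> Vdeg V k"
  shows "nprod V a (-1) e \<in> Vdeg V (d+k)"
proof -
  obtain K1 where K1: "\<forall>n. n \<ge> int K1 \<longrightarrow> nprod V (conf V) n a = 0" using trunc by blast
  obtain K2 where K2: "\<forall>n. n \<ge> int K2 \<longrightarrow> nprod V a n e = 0" using trunc by blast
  obtain K3 where K3: "\<forall>n. n \<ge> int K3 \<longrightarrow> nprod V (conf V) n e = 0" using trunc by blast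
  define M where "M = K1 + K2 + K3 + 2"
  have hyp: "\<forall>i>M. nprod V (conf V) (0 + int i) a = 0 \<and> nprod V a (-1 + int i) e = 0
             \<and> nprod V (conf V) (1 + int i) e = 0"
    using K1 K2 K3 by (auto simp: M_def)
  note B = borch[OF hyp]
  let ?t = "\<lambda>i. smul V ((of_int 1 :: complex) gchoose i)
                 (nprod V (nprod V (conf V) (0 + int i) a) (1 + -1 - int i) e)"
  have "(\<Sum>i\<le>M. ?t i) = (\<Sum>i\<le>Suc 0. ?t i)"
    by (rule sum.mono_neutral_right) (auto simp: M_def g1)
  also have "\<dots> = nprod V (nprod V (conf V) 0 a) 0 e + nprod V (nprod V (conf V) 1 a) (-1) e"
    by (simp add: g1)
  also have "nprod V (conf V) 0 a = Lmode V (-1) a" unfolding Lmode_def by simp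
  also have "nprod V (conf V) 1 a = smul V (of_nat d) a" using a unfolding Vdeg_def Lmode_def by simp
  finally have LHS: "(\<Sum>i\<le>M. ?t i) = smul V (of_nat d) (nprod V a (-1) e)"
    by (simp add: transl nprod_smulL)
  let ?u = "\<lambda>i. smul V ((-1) ^ i * ((of_int 0 :: complex) gchoose i))
                 (nprod V (conf V) (1 + 0 - int i) (nprod V a (-1 + int i) e)
                  - smul V (sgn_pow 0) (nprod V a (-1 + 0 - int i) (nprod V (conf V) (1 + int i) e)))"
  have "(\<Sum>i\<le>M. ?u i) = (\<Sum>i\<in>{0}. ?u i)"
    by (rule sum.mono_neutral_right) (auto simp: gbinomial_0_left)
  also have "\<dots> = Lmode V 0 (nprod V a (-1) e) - nprod V a (-1) (smul V (of_nat k) e)"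
    using e unfolding Vdeg_def Lmode_def by simp
  finally have RHS: "(\<Sum>i\<le>M. ?u i) = Lmode V 0 (nprod V a (-1) e) - smul V (of_nat k) (nprod V a (-1) e)"
    by (simp add: nprod_smulR)
  have "Lmode V 0 (nprod V a (-1) e) = smul V (of_nat d) (nprod V a (-1) e) + smul V (of_nat k) (nprod V a (-1) e)"
    using B LHS RHS by (simp add: algebra_simps)
  then show ?thesis unfolding Vdeg_def by (simp add: vs.scale_left_distrib)
qed

lemma gm1: "(-1) ^ i * ((-1::complex) gchoose i) = 1"
proof -
  have "((-1::complex) gchoose i) = (-1)^i * ((1 + of_nat i - 1) gchoose i)"
    using gbinomial_minus[of "1::complex" i] by simp
  also have "((1 + of_nat i - 1::complex) gchoose i) = of_nat (i choose i)"
    using binomial_gbinomial[of i i] by simp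
  finally have "((-1::complex) gchoose i) = (-1)^i" by simp
  then show ?thesis by (simp add: power_mult_distrib[symmetric] del: power_mult_distrib)
qed

lemma norder:
  assumes hyp: "\<forall>i>M. nprod V a (-1 + int i) b = 0 \<and> nprod V b (q + int i) c = 0 \<and> nprod V a (0 + int i) c = 0"
  shows "nprod V (nprod V a (-1) b) q c = (\<Sum>i\<le>M. nprod V a (-1 - int i) (nprod V b (q + int i) c)
           + nprod V b (q - 1 - int i) (nprod V a (int i) c))"
proof -
  note B = borch[OF hyp]
  let ?t = "\<lambda>i. smul V ((of_int 0 :: complex) gchoose i)
                 (nprod V (nprod V a (-1 + int i) b) (0 + q - int i) c)"
  have "(\<Sum>i\<le>M. ?t i) = (\<Sum>i\<in>{0}. ?t i)"
    by (rule sum.mono_neutral_right) (auto simp: gbinomial_0_left)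
  then have L: "(\<Sum>i\<le>M. ?t i) = nprod V (nprod V a (-1) b) q c" by simp
  have R: "(\<Sum>i\<le>M. smul V ((-1) ^ i * ((of_int (-1) :: complex) gchoose i))
                 (nprod V a (0 + -1 - int i) (nprod V b (q + int i) c)
                  - smul V (sgn_pow (-1)) (nprod V b (q + -1 - int i) (nprod V a (0 + int i) c))))
      = (\<Sum>i\<le>M. nprod V a (-1 - int i) (nprod V b (q + int i) c)
           + nprod V b (q - 1 - int i) (nprod V a (int i) c))"
    by (intro sum.cong refl) (simp add: gm1)
  have "(\<Sum>i\<le>M. ?t i) = (\<Sum>i\<le>M. nprod V a (-1 - int i) (nprod V b (q + int i) c)
           + nprod V b (q - 1 - int i) (nprod V a (int i) c))" using B R by (rule trans)
  with L show ?thesis by simp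
qed

lemmas UU = U[unfolded unitary_voa_def]
lemma ip_add2: "ip V x (y + z) = ip V x y + ip V x z" using UU[THEN conjunct2, THEN conjunct1] by blast
lemma ip_smul2: "ip V x (smul V c y) = c * ip V x y" using UU[THEN conjunct2, THEN conjunct2, THEN conjunct1] by blast
lemma ip_conj: "ip V y x = cnj (ip V x y)" using UU[THEN conjunct2, THEN conjunct2, THEN conjunct2, THEN conjunct1] by blast
lemma ip_pos: "Im (ip V x x) = 0 \<and> Re (ip V x x) \<ge> 0" using UU[THEN conjunct2, THEN conjunct2, THEN conjunct2, THEN conjunct2, THEN conjunct1] by blast
lemma ip_def0: "ip V x x = 0 \<Longrightarrow> x = 0" using UU[THEN conjunct2, THEN conjunct2, THEN conjunct2, THEN conjunct2, THEN conjunct2, THEN conjunct1] by blast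
lemma star_star[simp]: "star V (star V x) = x" using UU[THEN conjunct2, THEN conjunct2, THEN conjunct2, THEN conjunct2, THEN conjunct2, THEN conjunct2, THEN conjunct2, THEN conjunct2, THEN conjunct2, THEN conjunct1] by blast
lemma inv: "ip V b (mode V a n c) = ip V (mode V (star V a) (- n) b) c" using UU[THEN conjunct2, THEN conjunct2, THEN conjunct2, THEN conjunct2, THEN conjunct2, THEN conjunct2, THEN conjunct2, THEN conjunct2, THEN conjunct2, THEN conjunct2, THEN conjunct2] by blast

lemma ip_zero2[simp]: "ip V x 0 = 0"
  using ip_add2[of x 0 0] by simp
lemma ip_zero1[simp]: "ip V 0 x = 0"
  using ip_conj[of 0 x] by simp
lemma ip_add1: "ip V (y + z) x = ip V y x + ip V z x"
  using ip_conj[of "y+z" x] ip_conj[of x y] ip_conj[of x z] ip_add2[of x y z] by simp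
lemma ip_smul1: "ip V (smul V c y) x = cnj c * ip V y x"
  using ip_conj[of "smul V c y" x] ip_conj[of x y] ip_smul2[of x c y] by simp
lemma ip_diff2: "ip V x (y - z) = ip V x y - ip V x z"
  using ip_add2[of x "y - z" z] by simp
lemma ip_diff1: "ip V (y - z) x = ip V y x - ip V z x"
  using ip_add1[of "y - z" z x] by simp
lemma ip_sum2: "ip V x (sum f A) = (\<Sum>a\<in>A. ip V x (f a))"
  by (induction A rule: infinite_finite_induct) (simp_all add: ip_add2)

lemma ip_self_real: "ip V x x = complex_of_real (Re (ip V x x))"
  using ip_pos[of x] by (simp add: complex_eq_iff)

lemma vnorm_sq: "(vnorm V w)^2 = Re (ip V w w)"
  unfolding vnorm_def using ip_pos[of w] by simp

lemma main_pt:
  assumes a: "a \<in> Vdeg V d" and m: "m \<ge> 0"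
  shows "Im (ip V c (mode V (mode V a (- int d) (star V a)) 0 c)) = 0 \<and>
         (vnorm V (mode V a m c))^2 \<le> Re (ip V c (mode V (mode V a (- int d) (star V a)) 0 c))"
proof -
  have A: "\<And>n y. mode V a n y = nprod V a (n + int d - 1) y" by (rule mode_hom[OF a])
  have xa: "mode V a (- int d) (star V a) = nprod V a (-1) (star V a)" by (simp add: A)
  obtain f N where f: "\<forall>j. f j \<in> Vdeg V j" "\<forall>j>N. f j = 0" "star V a = sum f {..N}"
    using decomp_ex by blast
  have S: "\<And>n y. mode V (star V a) n y = (\<Sum>k\<le>N. nprod V (f k) (n + int k - 1) y)"
    by (rule mode_decomp[OF f])
  define g where "g j = (if d \<le> j then nprod V a (-1) (f (j - d)) else 0)" for j
  have gV: "\<forall>j. g j \<in> Vdeg V j"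
  proof
    fix j show "g j \<in> Vdeg V j"
    proof (cases "d \<le> j")
      case True
      have "nprod V a (-1) (f (j - d)) \<in> Vdeg V (d + (j - d))" using deg_prod[OF a] f(1) by blast
      then show ?thesis using True by (simp add: g_def)
    qed (simp add: g_def)
  qed
  have g0: "\<forall>j > N + d. g j = 0" using f(2) by (auto simp: g_def)
  have shift: "sum h {..N+d} = (\<Sum>k\<le>N. h (k+d))" if h: "\<forall>j<d. h j = 0" for h :: "nat \<Rightarrow> 'v"
  proof -
    have "sum h {..N+d} = sum h {0+d..N+d}"
      by (rule sum.mono_neutral_right) (use h in auto)
    also have "\<dots> = (\<Sum>k\<in>{0..N}. h (k+d))" by (rule sum.shift_bounds_cl_nat_ivl)
    finally show ?thesis by (simp add: atLeast0AtMost)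
  qed
  have xs: "nprod V a (-1) (star V a) = sum g {..N+d}"
    by (subst shift) (auto simp: g_def f(3) nprod_sumR)
  have Tc: "mode V (mode V a (- int d) (star V a)) 0 c
      = (\<Sum>k\<le>N. nprod V (nprod V a (-1) (f k)) (int k + int d - 1) c)"
  proof -
    have "mode V (mode V a (- int d) (star V a)) 0 c = (\<Sum>j\<le>N+d. nprod V (g j) (0 + int j - 1) c)"
      unfolding xa by (rule mode_decomp[OF gV g0 xs])
    also have "\<dots> = (\<Sum>k\<le>N. nprod V (g (k+d)) (0 + int (k+d) - 1) c)"
      by (rule shift) (simp add: g_def)
    also have "\<dots> = (\<Sum>k\<le>N. nprod V (nprod V a (-1) (f k)) (int k + int d - 1) c)"
      by (simp add: g_def)
    finally show ?thesis .
  qed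
  define Ka where "Ka k = (SOME K. \<forall>n. n \<ge> int K \<longrightarrow> nprod V a n (f k) = 0)" for k
  define Kf where "Kf k = (SOME K. \<forall>n. n \<ge> int K \<longrightarrow> nprod V (f k) n c = 0)" for k
  have Ka: "\<And>k n. n \<ge> int (Ka k) \<Longrightarrow> nprod V a n (f k) = 0"
    unfolding Ka_def using someI_ex[OF trunc] by blast
  have Kf: "\<And>k n. n \<ge> int (Kf k) \<Longrightarrow> nprod V (f k) n c = 0"
    unfolding Kf_def using someI_ex[OF trunc] by blast
  obtain Kc where Kc: "\<And>n. n \<ge> int Kc \<Longrightarrow> nprod V a n c = 0" using trunc by blast
  define M where "M = Kc + (\<Sum>k\<le>N. Ka k + Kf k) + 1"
  have hyp: "\<forall>i>M. nprod V a (-1 + int i) (f k) = 0 \<and> nprod V (f k) (int k + int d - 1 + int i) c = 0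
      \<and> nprod V a (0 + int i) c = 0" if k: "k \<le> N" for k
  proof -
    have "Ka k + Kf k \<le> (\<Sum>k\<le>N. Ka k + Kf k)"
      by (rule member_le_sum) (use k in auto)
    then show ?thesis using Ka Kf Kc by (auto simp: M_def)
  qed
  define y where "y i = mode V (star V a) (int d + int i) c" for i :: nat
  define z where "z i = mode V a (int i + 1 - int d) c" for i :: nat
  have z': "\<And>i. z i = nprod V a (int i) c" by (simp add: z_def A)
  have "mode V (mode V a (- int d) (star V a)) 0 c
      = (\<Sum>k\<le>N. \<Sum>i\<le>M. nprod V a (-1 - int i) (nprod V (f k) (int k + int d - 1 + int i) c)
           + nprod V (f k) (int k + int d - 1 - 1 - int i) (nprod V a (int i) c))"
    unfolding Tc by (intro sum.cong refl norder hyp) simp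
  also have "\<dots> = (\<Sum>i\<le>M. \<Sum>k\<le>N. nprod V a (-1 - int i) (nprod V (f k) (int k + int d - 1 + int i) c)
           + nprod V (f k) (int k + int d - 1 - 1 - int i) (nprod V a (int i) c))"
    by (rule sum.swap)
  also have "\<dots> = (\<Sum>i\<le>M. mode V a (- int d - int i) (y i) + mode V (star V a) (int d - 1 - int i) (z i))"
  proof (intro sum.cong refl)
    fix i
    have e1: "(\<Sum>k\<le>N. nprod V (f k) (int k + int d - 1 + int i) c) = y i"
      unfolding y_def S by (intro sum.cong refl arg_cong[where f="\<lambda>n. nprod V _ n c"]) simp
    have e2: "(\<Sum>k\<le>N. nprod V (f k) (int k + int d - 1 - 1 - int i) (nprod V a (int i) c))
        = mode V (star V a) (int d - 1 - int i) (z i)"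
      unfolding z' S by (intro sum.cong refl arg_cong[where f="\<lambda>n. nprod V _ n _"]) simp
    show "(\<Sum>k\<le>N. nprod V a (-1 - int i) (nprod V (f k) (int k + int d - 1 + int i) c)
           + nprod V (f k) (int k + int d - 1 - 1 - int i) (nprod V a (int i) c))
        = mode V a (- int d - int i) (y i) + mode V (star V a) (int d - 1 - int i) (z i)"
      unfolding sum.distrib nprod_sumR[symmetric] e1 e2
      by (simp add: A, rule arg_cong[where f="\<lambda>n. nprod V a n (y i)"], simp)
  qed
  finally have T2: "mode V (mode V a (- int d) (star V a)) 0 c
      = (\<Sum>i\<le>M. mode V a (- int d - int i) (y i) + mode V (star V a) (int d - 1 - int i) (z i))" .
  define Q where "Q i = Re (ip V (y i) (y i)) + Re (ip V (z i) (z i))" for i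
  have ipT: "ip V c (mode V (mode V a (- int d) (star V a)) 0 c) = (\<Sum>i\<le>M. complex_of_real (Q i))"
    unfolding T2 ip_sum2
  proof (intro sum.cong refl)
    fix i
    have "ip V c (mode V a (- int d - int i) (y i)) = ip V (mode V (star V a) (- (- int d - int i)) c) (y i)"
      by (rule inv)
    also have "mode V (star V a) (- (- int d - int i)) c = y i" unfolding y_def
      by (rule arg_cong[where f="\<lambda>n. mode V (star V a) n c"]) simp
    finally have 1: "ip V c (mode V a (- int d - int i) (y i)) = ip V (y i) (y i)" .
    have "ip V c (mode V (star V a) (int d - 1 - int i) (z i)) = ip V (mode V (star V (star V a)) (- (int d - 1 - int i)) c) (z i)"
      by (rule inv)
    also have "mode V (star V (star V a)) (- (int d - 1 - int i)) c = z i" unfolding z_def star_star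
      by (rule arg_cong[where f="\<lambda>n. mode V a n c"]) simp
    finally have 2: "ip V c (mode V (star V a) (int d - 1 - int i) (z i)) = ip V (z i) (z i)" .
    from 1 2 show "ip V c (mode V a (- int d - int i) (y i) + mode V (star V a) (int d - 1 - int i) (z i))
        = complex_of_real (Q i)"
      unfolding Q_def ip_add2 by (metis ip_self_real of_real_add)
  qed
  have Qnn: "\<And>i. Q i \<ge> 0" unfolding Q_def using ip_pos by (simp add: add_nonneg_nonneg)
  have ReT: "Re (ip V c (mode V (mode V a (- int d) (star V a)) 0 c)) = (\<Sum>i\<le>M. Q i)"
    unfolding ipT by (simp add: Re_sum)
  have ImT: "Im (ip V c (mode V (mode V a (- int d) (star V a)) 0 c)) = 0"
    unfolding ipT by (simp add: Im_sum)
  have Qle: "\<And>i. i \<le> M \<Longrightarrow> Q i \<le> (\<Sum>i\<le>M. Q i)"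
    by (rule member_le_sum) (use Qnn in auto)
  have goal2: "(vnorm V (mode V a m c))^2 \<le> (\<Sum>i\<le>M. Q i)"
  proof (cases "d = 0 \<and> m = 0")
    case True
    then have d0: "d = 0" and m0: "m = 0" by auto
    obtain lam where lam: "a = smul V lam (vac V)" using a V0 d0 by auto
    have A0: "\<And>w. mode V a 0 w = smul V lam w"
      unfolding A d0 by (simp add: lam nprod_smulL vac_left)
    have "ip V (mode V a 0 c) (mode V a 0 c) = ip V (mode V (star V a) 0 (mode V a 0 c)) c"
      using inv[of "mode V a 0 c" a 0 c] by simp
    also have "\<dots> = ip V (smul V lam (mode V (star V a) 0 c)) c" by (simp add: A0 mode_smulR)
    also have "\<dots> = ip V (mode V a 0 (y 0)) c" by (simp add: A0 y_def d0)
    also have "\<dots> = ip V (y 0) (y 0)"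
      using inv[of "y 0" "star V a" 0 c] by (simp add: y_def d0)
    finally have "(vnorm V (mode V a m c))^2 = Re (ip V (y 0) (y 0))" using m0 by (simp add: vnorm_sq)
    also have "\<dots> \<le> Q 0" unfolding Q_def using ip_pos by simp
    also have "\<dots> \<le> (\<Sum>i\<le>M. Q i)" by (rule Qle) simp
    finally show ?thesis .
  next
    case False
    then have pos: "m + int d - 1 \<ge> 0" using m by auto
    define i where "i = nat (m + int d - 1)"
    have mi: "m = int i + 1 - int d" using pos by (simp add: i_def)
    show ?thesis
    proof (cases "i \<le> M")
      case True
      have "(vnorm V (mode V a m c))^2 = Re (ip V (z i) (z i))" by (simp add: vnorm_sq z_def mi)
      also have "\<dots> \<le> Q i" unfolding Q_def using ip_pos by simp
      also have "\<dots> \<le> (\<Sum>i\<le>M. Q i)" by (rule Qle) (rule True)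
      finally show ?thesis .
    next
      case False
      have "mode V a m c = nprod V a (int i) c" by (simp add: A mi)
      also have "\<dots> = 0" by (rule Kc) (use False in \<open>simp add: M_def\<close>)
      finally show ?thesis using Qnn by (simp add: vnorm_def sum_nonneg)
    qed
  qed
  show ?thesis using ImT ReT goal2 by simp
qed

lemma vnorm_nn: "vnorm V w \<ge> 0"
  unfolding vnorm_def using ip_pos[of w] by simp

lemma vnorm0: "vnorm V w = 0 \<Longrightarrow> w = 0"
proof -
  assume "vnorm V w = 0"
  then have "Re (ip V w w) = 0" using vnorm_sq[of w] by simp
  then have "ip V w w = 0" using ip_self_real[of w] by simp
  then show "w = 0" by (rule ip_def0)
qed

lemma CS: "Re (ip V u w) \<le> vnorm V u * vnorm V w"
proof -
  define s where "s = vnorm V w"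
  define t where "t = vnorm V u"
  have uu: "Re (ip V u u) = t^2" using vnorm_sq[of u] by (simp add: t_def)
  have ww: "Re (ip V w w) = s^2" using vnorm_sq[of w] by (simp add: s_def)
  have wu: "Re (ip V w u) = Re (ip V u w)" using ip_conj[of w u] by simp
  define v where "v = smul V (of_real s) u - smul V (of_real t) w"
  have "ip V v v = of_real (s * s) * ip V u u - of_real (s * t) * ip V u w
      - of_real (t * s) * ip V w u + of_real (t * t) * ip V w w"
    unfolding v_def by (simp add: ip_diff1 ip_diff2 ip_smul1 ip_smul2 algebra_simps)
  then have "Re (ip V v v) = s * s*Re (ip V u u) - s * t*Re (ip V u w) - t * s*Re (ip V w u) + t * t* Re (ip V w w)"
    by simp
  also have "\<dots> = 2 * (s * t) * (s * t) - 2 * (s * t) * Re (ip V u w)"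
    using uu ww wu by (simp add: power2_eq_square algebra_simps)
  finally have ge: "0 \<le> 2 * (s * t) * (s * t) - 2 * (s * t) * Re (ip V u w)" using ip_pos[of v] by simp
  show ?thesis
  proof (cases "s * t > 0")
    case True
    then have "Re (ip V u w) \<le> s * t" using ge
      by (metis diff_ge_0_iff_ge mult_le_cancel_left_pos zero_less_mult_iff zero_less_numeral)
    then show ?thesis by (simp add: s_def t_def mult.commute)
  next
    case False
    then have "s = 0 \<or> t = 0" using vnorm_nn s_def t_def
      by (metis less_eq_real_def mult_pos_pos)
    then have "w = 0 \<or> u = 0" using vnorm0[of w] vnorm0[of u] unfolding s_def t_def by blast
    then show ?thesis using vnorm_nn by auto
  qed
qed

lemma zero_Vle: "0 \<in> Vle V n"
proof -
  have "hcomp V k 0 = 0" for k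
    using hcomp_eq[of "\<lambda>j. 0" 0 0 k] by simp
  then show ?thesis unfolding Vle_def by simp
qed

lemma opnorm_le:
  assumes a: "a \<in> Vdeg V d" and m: "m \<ge> 0"
  shows "(opnorm V n (mode V a m))^2 \<le> opnorm V n (mode V (mode V a (- int d) (star V a)) 0)"
  unfolding opnorm_def
proof (rule sup_sq)
  show "\<exists>b. b \<in> Vle V n \<and> vnorm V b \<le> 1"
    by (intro exI[of _ 0]) (simp add: zero_Vle vnorm_def)
next
  fix b assume b: "b \<in> Vle V n \<and> vnorm V b \<le> 1"
  let ?T = "mode V (mode V a (- int d) (star V a)) 0"
  have "(vnorm V (mode V a m b))^2 \<le> Re (ip V b (?T b))" using main_pt[OF a m] by blast
  also have "\<dots> \<le> vnorm V b * vnorm V (?T b)" by (rule CS)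
  also have "\<dots> \<le> vnorm V (?T b)" using b vnorm_nn by (simp add: mult_left_le_one_le)
  finally show "0 \<le> vnorm V (mode V a m b) \<and> (vnorm V (mode V a m b))^2 \<le> vnorm V (?T b)"
    using vnorm_nn by simp
qed

end

theorem mainTheorem1:
  fixes V :: "('v::ab_group_add) voa_data" and a :: 'v and d :: nat
  assumes "unitary_voa V" and "simple_voa V" and "a \<in> Vdeg V d"
  shows "(\<forall>b (m::int). m \<ge> 0 \<longrightarrow>
            Im (ip V b (mode V (mode V a (- int d) (star V a)) 0 b)) = 0 \<and>
            (vnorm V (mode V a m b))^2 \<le> Re (ip V b (mode V (mode V a (- int d) (star V a)) 0 b)))
       \<and> (\<forall>(m::int) (n::int). m \<ge> 0 \<longrightarrow>
            (opnorm V n (mode V a m))^2 \<le> opnorm V n (mode V (mode V a (- int d) (star V a)) 0))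
       \<and> (\<forall>n::int. (opnorm V n (mode V a 0))^2 \<le> opnorm V n (mode V (mode V a (- int d) (star V a)) 0))"
proof -
  interpret uv V by (rule uv.intro) (rule assms(1))
  show ?thesis using main_pt[OF assms(3)] opnorm_le[OF assms(3)] by simp
qed

end
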